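(* Let $\mathbb{K}$ be any field and let $p_1,\ldots,p_m\in\mathbb{K}[x]$ be tame polynomials. Let $k_1,\ldots,k_m,k$ be the orders of the groups $\Gamma_\mathbb{K}(p_1),\ldots,\Gamma_\mathbb{K}(p_m),\Gamma_\mathbb{K}(p_1\circ\cdots\circ p_m)$. Then $k$ divides $k_1k_2\cdots k_m$.
   Context: A polynomial $f\in\mathbb{K}[x]$ is called tame if $\mathrm{char}\,\mathbb{K}$ does not divide $\deg f$ (in particular a tame polynomial is non-constant). Composition is $g\circ h=g(h(x))$. For a non-constant rational function $f\in\mathbb{K}(x)$, its fixing group is $\Gamma_\mathbb{K}(f)=\{u=\frac{ax+b}{cx+d}: a,b,c,d\in\mathbb{K},\ ad-bc\neq 0,\ f\circ u=f\}$, a group under composition; it is finite, its order dividing $\deg f$. *)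

theory Defs
  imports "HOL-Computational_Algebra.Polynomial" "HOL-Computational_Algebra.Fraction_Field"
begin

definition tame :: "'a::field poly \<Rightarrow> bool" where
  "tame p \<longleftrightarrow> \<not> CHAR('a) dvd degree p"

definition mobius :: "'a::field \<Rightarrow> 'a \<Rightarrow> 'a \<Rightarrow> 'a \<Rightarrow> 'a poly fract" where
  "mobius a b c d = Fract [:b, a:] [:d, c:]"

definition poly_comp_ratfun :: "'a::field poly \<Rightarrow> 'a poly fract \<Rightarrow> 'a poly fract" where
  "poly_comp_ratfun f u = poly (map_poly (\<lambda>c. Fract [:c:] 1) f) u"

definition fixing_group :: "'a::field poly \<Rightarrow> 'a poly fract set" where
  "fixing_group f = {u. \<exists>a b c d. a * d - b * c \<noteq> 0 \<and> u = mobius a b c d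
                          \<and> poly_comp_ratfun f u = Fract f 1}"

end

theory Submission
  imports Defs "HOL-Algebra.Coset"
begin

lemma pcompose_idL: "pcompose [:0, 1:] (q::'a::field poly) = q"
  by (simp add: pcompose_pCons smult_one del: smult_one)

lemma pcompose_lin: "pcompose [:b, a:] q = [:b:] + smult a q"
  by (simp add: pcompose_pCons)

lemma pcompose_monom: "pcompose (monom c n) (q::'a::field poly) = smult c (q ^ n)"
proof -
  have "pcompose ([:0, 1:] ^ n) q = q ^ n"
  proof (induct n)
    case 0 then show ?case by (simp add: one_pCons)
  next
    case (Suc n) then show ?case
      by (simp only: power_Suc pcompose_mult pcompose_idL)
  qed
  then show ?thesis by (simp add: monom_altdef pcompose_smult)
qed

lemma pcompose_cancel_right:
  fixes p q h :: "'a::field poly"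
  assumes "degree h \<ge> 1" "pcompose p h = pcompose q h"
  shows "p = q"
proof -
  have "pcompose (p - q) h = 0" using assms by (simp add: pcompose_diff)
  then have "degree (p - q) * degree h = 0" by (metis degree_0 degree_pcompose)
  then have "degree (p - q) = 0" using assms by simp
  then obtain c where c: "p - q = [:c:]" using degree_eq_zeroE by blast
  then have "pcompose [:c:] h = 0" using \<open>pcompose (p - q) h = 0\<close> by simp
  then have "c = 0" by simp
  then show ?thesis using c by simp
qed

lemma decomp_unique:
  fixes A C G1 G2 :: "'a::field poly"
  assumes eq: "pcompose G1 A = pcompose G2 C"
    and dG1: "degree G1 = r" and dG2: "degree G2 = r" and r: "of_nat r \<noteq> (0::'a)"
    and dA: "degree A = n" and dC: "degree C = n" and n: "n \<ge> 1"
    and lc: "lead_coeff A = lead_coeff C" and c0: "coeff A 0 = coeff C 0"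
  shows "A = C"
proof (rule ccontr)
  assume ne: "A \<noteq> C"
  define D where "D = A - C"
  have D0: "D \<noteq> 0" using ne D_def by simp
  have cD: "coeff D 0 = 0" using c0 D_def by simp
  have dD1: "degree D \<ge> 1"
  proof (rule ccontr)
    assume "\<not> 1 \<le> degree D"
    then have "degree D = 0" by simp
    then obtain c where "D = [:c:]" using degree_eq_zeroE by blast
    then show False using cD D0 by simp
  qed
  have r1: "r \<ge> 1" using r by (cases r) auto
  have A0: "A \<noteq> 0" and C0: "C \<noteq> 0" using dA dC n by auto
  have lA: "lead_coeff A \<noteq> 0" using A0 by simp
  have "lead_coeff (pcompose G1 A) = lead_coeff G1 * lead_coeff A ^ r"
    using lead_coeff_comp[of A G1] dA dG1 n by simp
  moreover have "lead_coeff (pcompose G2 C) = lead_coeff G2 * lead_coeff A ^ r"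
    using lead_coeff_comp[of C G2] dC dG2 n lc by simp
  ultimately have lcG: "lead_coeff G1 = lead_coeff G2" using eq lA by simp
  define \<gamma> where "\<gamma> = lead_coeff G1"
  have \<gamma>0: "\<gamma> \<noteq> 0" using \<gamma>_def dG1 r1 by auto
  define R1 where "R1 = G1 - monom \<gamma> r"
  define R2 where "R2 = G2 - monom \<gamma> r"
  have dR1: "degree R1 \<le> r - 1"
    by (rule degree_le) (auto simp: R1_def \<gamma>_def dG1 coeff_eq_0 coeff_monom)
  have dR2: "degree R2 \<le> r - 1"
    by (rule degree_le) (auto simp: R2_def \<gamma>_def lcG dG2 coeff_eq_0 coeff_monom)
  have dR1A: "degree (pcompose R1 A) \<le> (r - 1) * n"
    using degree_pcompose_le[of R1 A] dR1 dA mult_le_mono1 order_trans by blast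
  have dR2C: "degree (pcompose R2 C) \<le> (r - 1) * n"
    using degree_pcompose_le[of R2 C] dR2 dC mult_le_mono1 order_trans by blast
  have e1: "pcompose G1 A = smult \<gamma> (A ^ r) + pcompose R1 A"
    unfolding R1_def by (simp add: pcompose_diff pcompose_monom)
  have e2: "pcompose G2 C = smult \<gamma> (C ^ r) + pcompose R2 C"
    unfolding R2_def by (simp add: pcompose_diff pcompose_monom)
  have key: "smult \<gamma> (A ^ r - C ^ r) = pcompose R2 C - pcompose R1 A"
    using eq e1 e2 by (simp add: smult_diff_right algebra_simps)
  have dRHS: "degree (pcompose R2 C - pcompose R1 A) \<le> (r - 1) * n"
    using dR1A dR2C degree_diff_le by blast
  define S where "S = (\<Sum>i<r. C ^ (r - Suc i) * A ^ i)"
  have AS: "A ^ r - C ^ r = D * S"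
    unfolding S_def D_def by (rule power_diff_sumr2)
  have terms: "coeff (C ^ (r - Suc i) * A ^ i) ((r - 1) * n) = lead_coeff A ^ (r - 1)"
    and termd: "degree (C ^ (r - Suc i) * A ^ i) = (r - 1) * n" if "i < r" for i
  proof -
    have d: "degree (C ^ (r - Suc i) * A ^ i) = (r - Suc i) * n + i * n"
      using A0 C0 dA dC by (simp add: degree_mult_eq degree_power_eq)
    have ri: "r - Suc i + i = r - 1" using that by arith
    have "(r - Suc i) * n + i * n = (r - Suc i + i) * n" by (simp only: add_mult_distrib)
    then have "(r - Suc i) * n + i * n = (r - 1) * n" using ri by simp
    then show dd: "degree (C ^ (r - Suc i) * A ^ i) = (r - 1) * n" using d by simp
    have "lead_coeff (C ^ (r - Suc i) * A ^ i) = lead_coeff A ^ (r - Suc i) * lead_coeff A ^ i"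
      by (simp add: lead_coeff_mult lead_coeff_power lc)
    also have "\<dots> = lead_coeff A ^ (r - 1)"
      using that by (simp add: power_add[symmetric])
    finally show "coeff (C ^ (r - Suc i) * A ^ i) ((r - 1) * n) = lead_coeff A ^ (r - 1)"
      using dd by simp
  qed
  have cS: "coeff S ((r - 1) * n) = of_nat r * lead_coeff A ^ (r - 1)"
    unfolding S_def coeff_sum using terms by simp
  have cS0: "coeff S ((r - 1) * n) \<noteq> 0" using cS r lA by simp
  have "degree S \<le> (r - 1) * n"
    unfolding S_def by (rule degree_sum_le) (auto simp: termd)
  moreover have "degree S \<ge> (r - 1) * n" using cS0 le_degree by blast
  ultimately have dS: "degree S = (r - 1) * n" by simp
  have S0: "S \<noteq> 0" using cS0 by auto
  have "degree (smult \<gamma> (A ^ r - C ^ r)) = degree D + (r - 1) * n"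
    using \<gamma>0 D0 S0 dS by (simp add: AS degree_mult_eq)
  then show False using dRHS key dD1 by simp
qed

lemma lin_form:
  assumes "degree (q::'a::field poly) = 1"
  shows "q = [:coeff q 0, coeff q 1:]"
proof (rule poly_eqI)
  fix i show "coeff q i = coeff [:coeff q 0, coeff q 1:] i"
    using assms by (cases i) (auto simp: coeff_eq_0 coeff_pCons split: nat.splits)
qed

definition linv :: "'a::field poly \<Rightarrow> 'a poly" where
  "linv q = [: - coeff q 0 / coeff q 1, 1 / coeff q 1 :]"

lemma linv_props:
  assumes "degree (q::'a::field poly) = 1"
  shows "degree (linv q) = 1" "pcompose q (linv q) = [:0, 1:]" "pcompose (linv q) q = [:0, 1:]"
proof -
  have a: "coeff q 1 \<noteq> 0" using assms by (metis leading_coeff_0_iff degree_0 zero_neq_one)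
  show "degree (linv q) = 1" using a by (simp add: linv_def)
  have "pcompose q (linv q) = pcompose [:coeff q 0, coeff q 1:] (linv q)"
    using lin_form[OF assms] by simp
  also have "\<dots> = [:0, 1:]" using a by (simp add: pcompose_lin linv_def)
  finally show "pcompose q (linv q) = [:0, 1:]" .
  have "pcompose (linv q) q = pcompose (linv q) [:coeff q 0, coeff q 1:]"
    using lin_form[OF assms] by simp
  also have "\<dots> = [:0, 1:]" using a by (simp add: pcompose_lin linv_def field_simps)
  finally show "pcompose (linv q) q = [:0, 1:]" .
qed

lemma lambda_exists:
  fixes g h u :: "'a::field poly"
  assumes tg: "of_nat (degree g) \<noteq> (0::'a)" and th: "of_nat (degree h) \<noteq> (0::'a)"
    and du: "degree u = 1" and fx: "pcompose g (pcompose h u) = pcompose g h"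
  shows "\<exists>l. degree l = 1 \<and> pcompose h u = pcompose l h"
proof -
  define n where "n = degree h"
  have n1: "n \<ge> 1" using th n_def by (cases n) auto
  define A where "A = pcompose h u"
  have dA: "degree A = n" using du by (simp add: A_def degree_pcompose n_def)
  have a0: "coeff u 1 \<noteq> 0" using du by (metis leading_coeff_0_iff degree_0 zero_neq_one)
  define \<alpha> where "\<alpha> = coeff u 1 ^ n"
  have \<alpha>0: "\<alpha> \<noteq> 0" using a0 by (simp add: \<alpha>_def)
  have lA: "lead_coeff A = lead_coeff h * \<alpha>"
    using lead_coeff_comp[of u h] du by (simp add: A_def \<alpha>_def n_def)
  define c where "c = coeff A 0 - \<alpha> * coeff h 0"
  define l where "l = [:c, \<alpha>:]"
  have dl: "degree l = 1" using \<alpha>0 by (simp add: l_def)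
  define C where "C = pcompose l h"
  have Ce: "C = [:c:] + smult \<alpha> h" by (simp add: C_def l_def pcompose_lin)
  have dC: "degree C = n"
    using dl by (simp add: C_def degree_pcompose n_def)
  have lC: "lead_coeff C = lead_coeff h * \<alpha>"
    using lead_coeff_comp[of h l] n1 \<alpha>0 by (simp add: C_def l_def n_def)
  have cC: "coeff C 0 = coeff A 0" by (simp add: Ce c_def)
  define G2 where "G2 = pcompose g (linv l)"
  have dG2: "degree G2 = degree g" using linv_props[OF dl] by (simp add: G2_def degree_pcompose)
  have "pcompose G2 C = pcompose g (pcompose (pcompose (linv l) l) h)"
    by (simp add: G2_def C_def pcompose_assoc)
  also have "\<dots> = pcompose g h" using linv_props[OF dl] by (simp add: pcompose_idL)
  also have "\<dots> = pcompose g A" using fx by (simp add: A_def)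
  finally have eq: "pcompose g A = pcompose G2 C" by simp
  have "A = C"
    by (rule decomp_unique[OF eq refl dG2 tg dA dC n1]) (simp_all add: lA lC cC)
  then show ?thesis using dl by (auto simp: A_def C_def)
qed

definition LinG :: "'a::field poly monoid" where
  "LinG = \<lparr>carrier = {q. degree q = 1}, mult = pcompose, one = [:0, 1:]\<rparr>"

lemma LinG_simps [simp]:
  "carrier LinG = {q. degree q = 1}" "mult LinG = pcompose" "one LinG = [:0, 1:]"
  by (simp_all add: LinG_def)

lemma group_LinG: "group (LinG :: 'a::field poly monoid)"
proof (rule groupI)
  fix x y z :: "'a poly"
  show "x \<in> carrier LinG \<Longrightarrow> y \<in> carrier LinG \<Longrightarrow> x \<otimes>\<^bsub>LinG\<^esub> y \<in> carrier LinG"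
    by (simp add: degree_pcompose)
  show "\<one>\<^bsub>LinG\<^esub> \<in> carrier (LinG :: 'a poly monoid)" by simp
  show "x \<otimes>\<^bsub>LinG\<^esub> y \<otimes>\<^bsub>LinG\<^esub> z = x \<otimes>\<^bsub>LinG\<^esub> (y \<otimes>\<^bsub>LinG\<^esub> z)"
    by (simp add: pcompose_assoc)
  show "\<one>\<^bsub>LinG\<^esub> \<otimes>\<^bsub>LinG\<^esub> x = x" by (simp add: pcompose_idL)
  show "x \<in> carrier LinG \<Longrightarrow> \<exists>y\<in>carrier LinG. y \<otimes>\<^bsub>LinG\<^esub> x = \<one>\<^bsub>LinG\<^esub>"
    using linv_props by fastforce
qed

lemma inv_LinG: "degree q = 1 \<Longrightarrow> inv\<^bsub>LinG\<^esub> q = linv (q::'a::field poly)"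
  using group.inv_equality[OF group_LinG, of "linv q" q] linv_props by auto

definition Lfix :: "'a::field poly \<Rightarrow> 'a poly set" where
  "Lfix f = {q. degree q = 1 \<and> pcompose f q = f}"

lemma subgroup_Lfix: "subgroup (Lfix f) (LinG :: 'a::field poly monoid)"
proof (rule group.subgroupI[OF group_LinG])
  show "Lfix f \<subseteq> carrier LinG" by (auto simp: Lfix_def)
  have "[:0, 1:] \<in> Lfix f" by (simp add: Lfix_def)
  then show "Lfix f \<noteq> {}" by blast
  fix a b assume a: "a \<in> Lfix f"
  then have "pcompose f (linv a) = pcompose (pcompose f a) (linv a)" by (simp add: Lfix_def)
  also have "\<dots> = pcompose f (pcompose a (linv a))" by (simp only: pcompose_assoc)
  also have "\<dots> = f"
  proof -
    have "degree a = 1" using a by (simp add: Lfix_def)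
    then have "pcompose a (linv a) = [:0, 1:]" by (rule linv_props(2))
    then show ?thesis by simp
  qed
  moreover have da: "degree a = 1" using a by (simp add: Lfix_def)
  ultimately show "inv\<^bsub>LinG\<^esub> a \<in> Lfix f" using linv_props(1)[OF da] by (simp add: inv_LinG[OF da] Lfix_def)
  assume b: "b \<in> Lfix f"
  show "a \<otimes>\<^bsub>LinG\<^esub> b \<in> Lfix f" using a b by (simp add: Lfix_def degree_pcompose pcompose_assoc)
qed

lemma card_Lfix_comp_dvd:
  fixes g h :: "'a::field poly"
  assumes tg: "of_nat (degree g) \<noteq> (0::'a)" and th: "of_nat (degree h) \<noteq> (0::'a)"
  shows "card (Lfix (pcompose g h)) dvd card (Lfix g) * card (Lfix h)"
proof -
  define f where "f = pcompose g h"
  interpret G: group "LinG :: 'a poly monoid" by (rule group_LinG)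
  have dh: "degree h \<ge> 1" using th by (cases "degree h") auto
  have sub_h: "Lfix h \<subseteq> Lfix f"
    by (auto simp: Lfix_def f_def pcompose_assoc[symmetric])
  define G1 where "G1 = (LinG :: 'a poly monoid)\<lparr>carrier := Lfix f\<rparr>"
  have grp1: "group G1" unfolding G1_def by (rule G.subgroup_imp_group[OF subgroup_Lfix])
  have sub1: "subgroup (Lfix h) G1"
    unfolding G1_def by (rule G.subgroup_incl[OF subgroup_Lfix subgroup_Lfix sub_h])
  have lag1: "card (rcosets\<^bsub>G1\<^esub> (Lfix h)) * card (Lfix h) = card (Lfix f)"
    using group.lagrange[OF grp1 sub1] by (simp add: order_def G1_def)
  define Im where "Im = {l. degree l = 1 \<and> (\<exists>u\<in>Lfix f. pcompose h u = pcompose l h)}"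
  have Im_sub: "Im \<subseteq> Lfix g"
  proof
    fix l assume "l \<in> Im"
    then obtain u where dl: "degree l = 1" and u: "u \<in> Lfix f" and hu: "pcompose h u = pcompose l h"
      by (auto simp: Im_def)
    have "pcompose (pcompose g l) h = pcompose g (pcompose l h)" by (simp add: pcompose_assoc)
    also have "\<dots> = pcompose g (pcompose h u)" using hu by simp
    also have "\<dots> = pcompose f u" by (simp add: f_def pcompose_assoc)
    also have "\<dots> = pcompose g h" using u by (simp add: Lfix_def f_def)
    finally have "pcompose g l = g" by (rule pcompose_cancel_right[OF dh])
    then show "l \<in> Lfix g" using dl by (simp add: Lfix_def)
  qed
  have Im_subgrp: "subgroup Im LinG"
  proof (rule G.subgroupI)
    show "Im \<subseteq> carrier LinG" by (auto simp: Im_def)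
    have "[:0, 1:] \<in> Lfix f" by (simp add: Lfix_def)
    then have "[:0, 1:] \<in> Im" unfolding Im_def
      by (auto simp: pcompose_idL intro!: bexI[of _ "[:0, 1:]"])
    then show "Im \<noteq> {}" by blast
  next
    fix l assume "l \<in> Im"
    then obtain u where dl: "degree l = 1" and u: "u \<in> Lfix f" and hu: "pcompose h u = pcompose l h"
      by (auto simp: Im_def)
    have du: "degree u = 1" using u by (simp add: Lfix_def)
    have iu: "linv u \<in> Lfix f"
      using subgroup.m_inv_closed[OF subgroup_Lfix u] inv_LinG[OF du] by simp
    have "pcompose (linv l) h = pcompose (pcompose (linv l) h) (pcompose u (linv u))"
      using linv_props(2)[OF du] by simp
    also have "\<dots> = pcompose (pcompose (linv l) (pcompose h u)) (linv u)"
      by (simp add: pcompose_assoc)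
    also have "\<dots> = pcompose (pcompose (pcompose (linv l) l) h) (linv u)"
      by (simp add: hu pcompose_assoc)
    also have "\<dots> = pcompose h (linv u)" using linv_props(3)[OF dl] by (simp add: pcompose_idL)
    finally have "pcompose h (linv u) = pcompose (linv l) h" by simp
    then show "inv\<^bsub>LinG\<^esub> l \<in> Im"
      using iu linv_props(1)[OF dl] inv_LinG[OF dl] by (auto simp: Im_def)
  next
    fix l1 l2 assume "l1 \<in> Im" "l2 \<in> Im"
    then obtain u1 u2 where dl1: "degree l1 = 1" and u1: "u1 \<in> Lfix f" and hu1: "pcompose h u1 = pcompose l1 h"
      and dl2: "degree l2 = 1" and u2: "u2 \<in> Lfix f" and hu2: "pcompose h u2 = pcompose l2 h"
      by (auto simp: Im_def)
    have uu: "pcompose u1 u2 \<in> Lfix f"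
      using subgroup.m_closed[OF subgroup_Lfix u1 u2] by simp
    have "pcompose h (pcompose u1 u2) = pcompose (pcompose l1 h) u2"
      by (simp add: pcompose_assoc hu1)
    also have "\<dots> = pcompose l1 (pcompose l2 h)" by (simp add: pcompose_assoc[symmetric] hu2)
    also have "\<dots> = pcompose (pcompose l1 l2) h" by (simp add: pcompose_assoc)
    finally show "l1 \<otimes>\<^bsub>LinG\<^esub> l2 \<in> Im"
      using uu dl1 dl2 by (auto simp: Im_def degree_pcompose)
  qed
  have sub2: "subgroup Im ((LinG :: 'a poly monoid)\<lparr>carrier := Lfix g\<rparr>)"
    by (rule G.subgroup_incl[OF Im_subgrp subgroup_Lfix Im_sub])
  have grp2: "group ((LinG :: 'a poly monoid)\<lparr>carrier := Lfix g\<rparr>)"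
    by (rule G.subgroup_imp_group[OF subgroup_Lfix])
  have lag2: "card (rcosets\<^bsub>(LinG :: 'a poly monoid)\<lparr>carrier := Lfix g\<rparr>\<^esub> Im) * card Im = card (Lfix g)"
    using group.lagrange[OF grp2 sub2] by (simp add: order_def)
  then have dvdIm: "card Im dvd card (Lfix g)" by (metis dvd_triv_right)
  have cos: "r_coset G1 (Lfix h) a = {w. degree w = 1 \<and> pcompose h w = pcompose h a}"
    if a: "a \<in> Lfix f" for a
  proof (rule Set.set_eqI)
    have da: "degree a = 1" using a by (simp add: Lfix_def)
    fix w
    show "w \<in> r_coset G1 (Lfix h) a \<longleftrightarrow> w \<in> {w. degree w = 1 \<and> pcompose h w = pcompose h a}"
    proof
      assume "w \<in> r_coset G1 (Lfix h) a"
      then obtain v where v: "v \<in> Lfix h" and w: "w = pcompose v a"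
        by (auto simp: r_coset_def G1_def)
      have "pcompose h w = pcompose (pcompose h v) a" by (simp add: w pcompose_assoc)
      also have "\<dots> = pcompose h a" using v by (simp add: Lfix_def)
      finally show "w \<in> {w. degree w = 1 \<and> pcompose h w = pcompose h a}"
        using v da by (simp add: w Lfix_def degree_pcompose)
    next
      assume "w \<in> {w. degree w = 1 \<and> pcompose h w = pcompose h a}"
      then have dw: "degree w = 1" and hw: "pcompose h w = pcompose h a" by auto
      define v where "v = pcompose w (linv a)"
      have "pcompose h v = pcompose (pcompose h a) (linv a)"
        by (simp add: v_def pcompose_assoc hw)
      also have "\<dots> = pcompose h (pcompose a (linv a))" by (simp add: pcompose_assoc)
      also have "\<dots> = h" using linv_props(2)[OF da] by simp
      finally have vL: "v \<in> Lfix h"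
        using dw linv_props(1)[OF da] by (simp add: Lfix_def v_def degree_pcompose)
      have "pcompose v a = pcompose w (pcompose (linv a) a)" by (simp add: v_def pcompose_assoc)
      also have "\<dots> = w" using linv_props(3)[OF da] by simp
      finally show "w \<in> r_coset G1 (Lfix h) a"
        using vL by (auto simp: r_coset_def G1_def)
    qed
  qed
  define \<Phi> where "\<Phi> y = {w. degree w = 1 \<and> pcompose h w = y}" for y
  have "rcosets\<^bsub>G1\<^esub> (Lfix h) = (\<lambda>a. r_coset G1 (Lfix h) a) ` Lfix f"
    unfolding RCOSETS_def by (auto simp: G1_def)
  also have "\<dots> = (\<lambda>a. \<Phi> (pcompose h a)) ` Lfix f"
    using cos by (auto simp: \<Phi>_def)
  also have "\<dots> = \<Phi> ` ((\<lambda>u. pcompose h u) ` Lfix f)" by (simp add: image_image)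
  finally have rc: "rcosets\<^bsub>G1\<^esub> (Lfix h) = \<Phi> ` ((\<lambda>u. pcompose h u) ` Lfix f)" .
  have injPhi: "inj_on \<Phi> ((\<lambda>u. pcompose h u) ` Lfix f)"
  proof (rule inj_onI)
    fix x y assume "x \<in> (\<lambda>u. pcompose h u) ` Lfix f" "y \<in> (\<lambda>u. pcompose h u) ` Lfix f"
      and e: "\<Phi> x = \<Phi> y"
    then obtain a where a: "a \<in> Lfix f" and xa: "x = pcompose h a" by auto
    have "a \<in> \<Phi> x" using a xa by (simp add: \<Phi>_def Lfix_def)
    then have "a \<in> \<Phi> y" using e by simp
    then show "x = y" using xa by (simp add: \<Phi>_def)
  qed
  have img: "(\<lambda>u. pcompose h u) ` Lfix f = (\<lambda>l. pcompose l h) ` Im"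
  proof
    show "(\<lambda>u. pcompose h u) ` Lfix f \<subseteq> (\<lambda>l. pcompose l h) ` Im"
    proof
      fix y assume "y \<in> (\<lambda>u. pcompose h u) ` Lfix f"
      then obtain u where u: "u \<in> Lfix f" and y: "y = pcompose h u" by auto
      have du: "degree u = 1" using u by (simp add: Lfix_def)
      have "pcompose g (pcompose h u) = pcompose g h"
        using u by (simp add: Lfix_def f_def pcompose_assoc)
      then obtain l where "degree l = 1" "pcompose h u = pcompose l h"
        using lambda_exists[OF tg th du] by blast
      then show "y \<in> (\<lambda>l. pcompose l h) ` Im" using u y by (auto simp: Im_def)
    qed
  next
    show "(\<lambda>l. pcompose l h) ` Im \<subseteq> (\<lambda>u. pcompose h u) ` Lfix f"
      unfolding Im_def by (auto intro: image_eqI[OF sym])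
  qed
  have injR: "inj_on (\<lambda>l. pcompose l h) Im"
    by (rule inj_onI) (rule pcompose_cancel_right[OF dh])
  have "card (rcosets\<^bsub>G1\<^esub> (Lfix h)) = card Im"
    using rc card_image[OF injPhi] img card_image[OF injR] by simp
  then have "card (Lfix f) = card Im * card (Lfix h)" using lag1 by simp
  then show ?thesis using dvdIm by (simp add: f_def)
qed

lemma comp_fract1:
  fixes f q :: "'a::field poly"
  shows "poly_comp_ratfun f (Fract q 1) = Fract (pcompose f q) 1"
  unfolding poly_comp_ratfun_def
proof (induct f)
  case 0
  then show ?case by (simp add: Zero_fract_def)
next
  case (pCons a p)
  have "map_poly (\<lambda>c. Fract [:c:] 1) (pCons a p) = pCons (Fract [:a:] 1) (map_poly (\<lambda>c. Fract [:c:] 1) p)"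
    by (rule map_poly_pCons) (simp add: Zero_fract_def)
  then show ?case using pCons by (simp add: pcompose_pCons)
qed

lemma power_Fract: "Fract (a::'a::idom) b ^ n = Fract (a ^ n) (b ^ n)"
  by (induct n) (simp_all add: One_fract_def)

lemma sum_Fract:
  assumes "D \<noteq> (0::'a::idom)"
  shows "(\<Sum>i\<in>A. Fract (x i) D) = Fract (\<Sum>i\<in>A. x i) D"
proof (induct A rule: infinite_finite_induct)
  case (infinite A) then show ?case by (simp add: Zero_fract_def eq_fract)
next
  case empty then show ?case by (simp add: Zero_fract_def eq_fract)
next
  case (insert a A)
  then show ?case using assms by (simp add: eq_fract algebra_simps)
qed

lemma comp_fract_hom:
  fixes f P Q :: "'a::field poly"
  assumes Q: "Q \<noteq> 0"
  shows "poly_comp_ratfun f (Fract P Q) =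
     Fract (\<Sum>i\<le>degree f. smult (coeff f i) (P ^ i * Q ^ (degree f - i))) (Q ^ degree f)"
proof -
  define n where "n = degree f"
  define F where "F = map_poly (\<lambda>c. Fract [:c:] 1) f"
  have dF: "degree F = n" unfolding F_def n_def
    by (rule degree_map_poly) (simp add: Zero_fract_def eq_fract)
  have cF: "coeff F i = Fract [:coeff f i:] 1" for i unfolding F_def
    by (rule coeff_map_poly) (simp add: Zero_fract_def eq_fract)
  have "poly_comp_ratfun f (Fract P Q) = (\<Sum>i\<le>n. coeff F i * Fract P Q ^ i)"
    unfolding poly_comp_ratfun_def F_def[symmetric] poly_altdef dF ..
  also have "\<dots> = (\<Sum>i\<le>n. Fract (smult (coeff f i) (P ^ i * Q ^ (n - i))) (Q ^ n))"
  proof (rule sum.cong[OF refl])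
    fix i assume "i \<in> {..n}"
    then have i: "i \<le> n" by simp
    have Qn: "Q ^ n = Q ^ i * Q ^ (n - i)" using i by (simp add: power_add[symmetric])
    show "coeff F i * Fract P Q ^ i = Fract (smult (coeff f i) (P ^ i * Q ^ (n - i))) (Q ^ n)"
      using Q by (simp add: cF power_Fract eq_fract Qn algebra_simps)
  qed
  also have "\<dots> = Fract (\<Sum>i\<le>n. smult (coeff f i) (P ^ i * Q ^ (n - i))) (Q ^ n)"
    using Q by (simp add: sum_Fract)
  finally show ?thesis by (simp add: n_def)
qed

lemma c_zero:
  fixes f :: "'a::field poly"
  assumes df: "degree f \<ge> 1" and det: "a * d - b * c \<noteq> 0"
    and eq: "poly_comp_ratfun f (Fract [:b, a:] [:d, c:]) = Fract f 1"
  shows "c = 0"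
proof (rule ccontr)
  assume c: "c \<noteq> 0"
  define P where "P = [:b, a:]"
  define Q where "Q = [:d, c:]"
  define n where "n = degree f"
  have Q0: "Q \<noteq> 0" using c by (simp add: Q_def)
  define H where "H = (\<Sum>i\<le>n. smult (coeff f i) (P ^ i * Q ^ (n - i)))"
  have "Fract H (Q ^ n) = Fract f 1"
    using eq comp_fract_hom[OF Q0, of f P] by (simp add: H_def n_def P_def Q_def)
  then have HQ: "H = f * Q ^ n" using Q0 by (simp add: eq_fract)
  define x0 where "x0 = - d / c"
  have Qx: "poly Q x0 = 0" using c by (simp add: Q_def x0_def)
  have Px: "poly P x0 \<noteq> 0"
  proof
    assume "poly P x0 = 0"
    then have "b + a * (- d / c) = 0" by (simp add: P_def x0_def)
    then have "b * c - a * d = 0" using c by (simp add: field_simps)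
    then show False using det by (simp add: algebra_simps)
  qed
  have "poly H x0 = (\<Sum>i\<le>n. coeff f i * (poly P x0 ^ i * poly Q x0 ^ (n - i)))"
    by (simp add: H_def poly_sum)
  also have "\<dots> = (\<Sum>i\<le>n. if i = n then coeff f n * poly P x0 ^ n else 0)"
    by (rule sum.cong[OF refl]) (auto simp: Qx)
  also have "\<dots> = coeff f n * poly P x0 ^ n" by simp
  finally have "poly H x0 = coeff f n * poly P x0 ^ n" .
  moreover have "poly H x0 = 0" using HQ Qx df by (simp add: n_def)
  moreover have "coeff f n \<noteq> 0" using df by (auto simp: n_def)
  ultimately show False using Px by simp
qed

lemma fixing_group_eq:
  fixes f :: "'a::field poly"
  assumes df: "degree f \<ge> 1"
  shows "fixing_group f = (\<lambda>q. Fract q 1) ` Lfix f"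
proof
  show "fixing_group f \<subseteq> (\<lambda>q. Fract q 1) ` Lfix f"
  proof
    fix u assume "u \<in> fixing_group f"
    then obtain a b c d where det: "a * d - b * c \<noteq> 0" and u: "u = mobius a b c d"
      and eq: "poly_comp_ratfun f u = Fract f 1" by (auto simp: fixing_group_def)
    have eq': "poly_comp_ratfun f (Fract [:b, a:] [:d, c:]) = Fract f 1"
      using eq u by (simp add: mobius_def)
    have c0: "c = 0" by (rule c_zero[OF df det eq'])
    then have ad: "a \<noteq> 0" "d \<noteq> 0" using det by auto
    define q where "q = [:b / d, a / d:]"
    have dq: "degree q = 1" using ad by (simp add: q_def)
    have "Fract [:b, a:] [:d, c:] = Fract q 1"
      using ad c0 by (simp add: q_def eq_fract)
    then have uq: "u = Fract q 1" using u c0 by (simp add: mobius_def)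
    then have "Fract (pcompose f q) 1 = Fract f 1" using eq by (simp add: comp_fract1)
    then have "pcompose f q = f" by (simp add: eq_fract)
    then show "u \<in> (\<lambda>q. Fract q 1) ` Lfix f" using uq dq by (auto simp: Lfix_def)
  qed
next
  show "(\<lambda>q. Fract q 1) ` Lfix f \<subseteq> fixing_group f"
  proof
    fix u assume "u \<in> (\<lambda>q. Fract q 1) ` Lfix f"
    then obtain q where q: "q \<in> Lfix f" and u: "u = Fract q 1" by auto
    have dq: "degree q = 1" and fq: "pcompose f q = f" using q by (auto simp: Lfix_def)
    have a: "coeff q 1 \<noteq> 0" using dq by (metis leading_coeff_0_iff degree_0 zero_neq_one)
    have "u = mobius (coeff q 1) (coeff q 0) 0 1"
      using lin_form[OF dq] u by (simp add: mobius_def one_pCons[symmetric])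
    moreover have "poly_comp_ratfun f u = Fract f 1" using u fq by (simp add: comp_fract1)
    ultimately show "u \<in> fixing_group f" using a unfolding fixing_group_def
      by (intro CollectI exI[of _ "coeff q 1"] exI[of _ "coeff q 0"] exI[of _ 0] exI[of _ 1]) simp
  qed
qed

lemma card_fixing_group:
  fixes f :: "'a::field poly"
  assumes df: "degree f \<ge> 1"
  shows "card (fixing_group f) = card (Lfix f)"
proof -
  have "inj_on (\<lambda>q. Fract q 1) (Lfix f)"
    by (rule inj_onI) (simp add: eq_fract)
  then show ?thesis using fixing_group_eq[OF df] card_image by metis
qed

lemma tame_iff: "tame (p::'a::field poly) \<longleftrightarrow> of_nat (degree p) \<noteq> (0::'a)"
  by (simp add: tame_def of_nat_eq_0_iff_char_dvd)

lemma of_nat_deg_ge1: "of_nat (degree (p::'a::field poly)) \<noteq> (0::'a) \<Longrightarrow> degree p \<ge> 1"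
  by (cases "degree p") auto

lemma foldr_tame:
  fixes ps :: "'a::field poly list"
  assumes "\<forall>p\<in>set ps. of_nat (degree p) \<noteq> (0::'a)"
  shows "of_nat (degree (foldr pcompose ps [:0, 1:])) \<noteq> (0::'a)"
  using assms by (induct ps) (simp_all add: degree_pcompose)

lemma Lfix_id: "Lfix ([:0, 1:] :: 'a::field poly) = {[:0, 1:]}"
  by (auto simp: Lfix_def pcompose_idL)

lemma main_Lfix:
  fixes ps :: "'a::field poly list"
  assumes "\<forall>p\<in>set ps. of_nat (degree p) \<noteq> (0::'a)"
  shows "card (Lfix (foldr pcompose ps [:0, 1:])) dvd (\<Prod>p\<leftarrow>ps. card (Lfix p))"
  using assms
proof (induct ps)
  case Nil
  then show ?case by (simp add: Lfix_id)
next
  case (Cons p ps)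
  have tp: "of_nat (degree p) \<noteq> (0::'a)" using Cons by simp
  have tH: "of_nat (degree (foldr pcompose ps [:0, 1:])) \<noteq> (0::'a)"
    using Cons foldr_tame by auto
  have "card (Lfix (foldr pcompose (p # ps) [:0, 1:])) dvd
        card (Lfix p) * card (Lfix (foldr pcompose ps [:0, 1:]))"
    using card_Lfix_comp_dvd[OF tp tH] by simp
  also have "\<dots> dvd card (Lfix p) * (\<Prod>p\<leftarrow>ps. card (Lfix p))"
    using Cons by (simp add: mult_dvd_mono)
  finally show ?case by simp
qed

theorem mainTheorem2:
  fixes ps :: "'a::field poly list"
  assumes "\<forall>p\<in>set ps. tame p"
  shows "card (fixing_group (foldr pcompose ps [:0, 1:]))
           dvd (\<Prod>p\<leftarrow>ps. card (fixing_group p))"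
proof -
  have t: "\<forall>p\<in>set ps. of_nat (degree p) \<noteq> (0::'a)" using assms by (simp add: tame_iff)
  have "card (fixing_group (foldr pcompose ps [:0, 1:])) = card (Lfix (foldr pcompose ps [:0, 1:]))"
    by (rule card_fixing_group[OF of_nat_deg_ge1[OF foldr_tame[OF t]]])
  moreover have "(\<Prod>p\<leftarrow>ps. card (fixing_group p)) = (\<Prod>p\<leftarrow>ps. card (Lfix p))"
    using t by (intro arg_cong[where f = prod_list] map_cong refl card_fixing_group of_nat_deg_ge1) auto
  ultimately show ?thesis using main_Lfix[OF t] by simp
qed

end
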